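(* Let $T=(V,E)$ be a finite undirected tree, let $\mathcal{O}$ be a nonempty proper subset of $V$ (the observers), and consider the infection model described in the context, with unknown source $s\in V$. Then, with probability one, $s$ does not belong to any non-feasible equivalence class $r\in[\mathcal{O}]$.
   Context: Infection model: an infection starts at time $0$ at a single node $s\in V$ (the source). For each edge $e\in E$ there is a nonnegative random delay $\tau_e$ with a continuous (atomless) distribution, and the $\tau_e$, $e\in E$, are independent. For $u,v\in V$, $[u,v]$ denotes the set of edges (or vertices, depending on context) of the unique path in $T$ between $u$ and $v$. The infection time of $v\in V$ is $\tau_v:=\sum_{e\in[s,v]}\tau_e$. Only the $\tau_o$, $o\in\mathcal{O}$, are observed. Equivalence classes: for $u,v\in V\setminus\mathcal{O}$, $u\equiv v$ iff $[u,v]\cap\mathcal{O}=\emptyset$ (vertex sets). $[\mathcal{O}]$ is the set of equivalence classes. For $r\in[\mathcal{O}]$, its boundary $\partial r$ is the set of observers adjacent to some node of $r$. For $o\in\mathcal{O}$ and a class $r$, $V_{o;r}:=\{v\in V: [o,v]\cap r=\emptyset\}$ (vertex sets), and $T_{o;r}$ is the subtree of $T$ induced on $V_{o;r}$, rooted at $o$. A class $r\in[\mathcal{O}]$ is feasible (for a given realization of the observed times) if for every $o\in\partial r$ and every $o_1,o_2\in V_{o;r}\cap\mathcal{O}$ with $o_1$ an ancestor of $o_2$ in $T_{o;r}$, one has $\tau_{o_1}\le\tau_{o_2}$. *)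

theory Defs
  imports "HOL-Probability.Probability"
begin

fun walk :: "'a set set \<Rightarrow> 'a list \<Rightarrow> bool" where
  "walk E [] = True"
| "walk E [x] = True"
| "walk E (x # y # xs) = ({x, y} \<in> E \<and> walk E (y # xs))"

definition is_path :: "'a set set \<Rightarrow> 'a \<Rightarrow> 'a \<Rightarrow> 'a list \<Rightarrow> bool" where
  "is_path E u v xs \<longleftrightarrow> xs \<noteq> [] \<and> hd xs = u \<and> last xs = v \<and> distinct xs \<and> walk E xs"

definition is_tree :: "'a set \<Rightarrow> 'a set set \<Rightarrow> bool" where
  "is_tree V E \<longleftrightarrow> finite V \<and> V \<noteq> {} \<and>
     (\<forall>e\<in>E. \<exists>x y. e = {x, y} \<and> x \<noteq> y \<and> x \<in> V \<and> y \<in> V) \<and>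
     (\<forall>u\<in>V. \<forall>v\<in>V. \<exists>!xs. is_path E u v xs)"

definition the_path :: "'a set set \<Rightarrow> 'a \<Rightarrow> 'a \<Rightarrow> 'a list" where
  "the_path E u v = (THE xs. is_path E u v xs)"

definition path_verts :: "'a set set \<Rightarrow> 'a \<Rightarrow> 'a \<Rightarrow> 'a set" where
  "path_verts E u v = set (the_path E u v)"

definition path_edges :: "'a set set \<Rightarrow> 'a \<Rightarrow> 'a \<Rightarrow> 'a set set" where
  "path_edges E u v = (let xs = the_path E u v in
      {{xs ! i, xs ! Suc i} | i. Suc i < length xs})"

definition infection_time ::
  "'a set set \<Rightarrow> 'a \<Rightarrow> ('a set \<Rightarrow> 'm \<Rightarrow> real) \<Rightarrow> 'a \<Rightarrow> 'm \<Rightarrow> real" where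
  "infection_time E s tau v w = (\<Sum>e\<in>path_edges E s v. tau e w)"

definition obs_equiv :: "'a set \<Rightarrow> 'a set set \<Rightarrow> 'a set \<Rightarrow> ('a \<times> 'a) set" where
  "obs_equiv V E Obs = {(u, v). u \<in> V - Obs \<and> v \<in> V - Obs \<and> path_verts E u v \<inter> Obs = {}}"

definition obs_classes :: "'a set \<Rightarrow> 'a set set \<Rightarrow> 'a set \<Rightarrow> 'a set set" where
  "obs_classes V E Obs = (V - Obs) // obs_equiv V E Obs"

definition boundary :: "'a set set \<Rightarrow> 'a set \<Rightarrow> 'a set \<Rightarrow> 'a set" where
  "boundary E Obs r = {ob \<in> Obs. \<exists>v\<in>r. {ob, v} \<in> E}"

definition V_or :: "'a set \<Rightarrow> 'a set set \<Rightarrow> 'a \<Rightarrow> 'a set \<Rightarrow> 'a set" where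
  "V_or V E ob r = {v \<in> V. path_verts E ob v \<inter> r = {}}"

text \<open>ob1 is an ancestor of ob2 in T_{ob;r} (rooted at ob): both lie in V_{ob;r} and ob1 lies
  on the path from the root ob to ob2 (paths in the subtree are paths of T).\<close>
definition ancestor_in :: "'a set \<Rightarrow> 'a set set \<Rightarrow> 'a \<Rightarrow> 'a set \<Rightarrow> 'a \<Rightarrow> 'a \<Rightarrow> bool" where
  "ancestor_in V E ob r ob1 ob2 \<longleftrightarrow> ob1 \<in> V_or V E ob r \<and> ob2 \<in> V_or V E ob r \<and> ob1 \<in> path_verts E ob ob2"

definition feasible ::
  "'a set \<Rightarrow> 'a set set \<Rightarrow> 'a set \<Rightarrow> 'a \<Rightarrow> ('a set \<Rightarrow> 'm \<Rightarrow> real) \<Rightarrow> 'a set \<Rightarrow> 'm \<Rightarrow> bool" where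
  "feasible V E Obs s tau r w \<longleftrightarrow>
     (\<forall>ob\<in>boundary E Obs r. \<forall>ob1\<in>V_or V E ob r \<inter> Obs. \<forall>ob2\<in>V_or V E ob r \<inter> Obs.
        ancestor_in V E ob r ob1 ob2 \<longrightarrow> infection_time E s tau ob1 w \<le> infection_time E s tau ob2 w)"

end

theory Submission
  imports Defs
begin

lemma walk_append: "walk E (xs @ y # ys) \<longleftrightarrow> walk E (xs @ [y]) \<and> walk E (y # ys)"
proof (induction xs)
  case Nil then show ?case by (cases ys) auto
next
  case (Cons a xs) then show ?case by (cases xs) auto
qed

lemma walk_rev: "walk E (rev xs) \<longleftrightarrow> walk E xs"
proof (induction xs)
  case Nil then show ?case by simp
next
  case (Cons a xs)
  show ?case
  proof (cases xs)
    case Nil then show ?thesis by simp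
  next
    case (Cons b xs')
    have "walk E (rev (a # xs)) = walk E (rev xs' @ b # [a])" using Cons by simp
    also have "\<dots> = (walk E (rev xs) \<and> {a, b} \<in> E)"
      using Cons walk_append[of E "rev xs'" b "[a]"] by (simp add: insert_commute)
    finally show ?thesis using Cons \<open>walk E (rev xs) = walk E xs\<close> by auto
  qed
qed

lemma walk_edges: "walk E xs \<Longrightarrow> Suc i < length xs \<Longrightarrow> {xs!i, xs!Suc i} \<in> E"
proof (induction xs arbitrary: i)
  case Nil then show ?case by simp
next
  case (Cons a xs)
  then obtain b xs' where xs: "xs = b # xs'" by (cases xs) auto
  show ?case
  proof (cases i)
    case 0 then show ?thesis using Cons.prems xs by simp
  next
    case (Suc j) then show ?thesis using Cons xs by simp
  qed
qed

lemma walk_V: "\<forall>e\<in>E. e \<subseteq> V \<Longrightarrow> walk E xs \<Longrightarrow> xs \<noteq> [] \<Longrightarrow> hd xs \<in> V \<Longrightarrow> set xs \<subseteq> V"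
proof (induction xs)
  case Nil then show ?case by simp
next
  case (Cons a xs)
  show ?case
  proof (cases xs)
    case Nil then show ?thesis using Cons by simp
  next
    case (Cons b ys)
    then have "{a, b} \<in> E" "walk E xs" using Cons.prems by auto
    then have "b \<in> V" using Cons.prems(1) by blast
    then show ?thesis using Cons.IH Cons.prems \<open>walk E xs\<close> Cons by auto
  qed
qed

lemma walk_to_path: "walk E xs \<Longrightarrow> xs \<noteq> [] \<Longrightarrow> \<exists>ys. is_path E (hd xs) (last xs) ys \<and> set ys \<subseteq> set xs"
proof (induction "length xs" arbitrary: xs rule: less_induct)
  case less
  show ?case
  proof (cases "distinct xs")
    case True thus ?thesis using less.prems unfolding is_path_def by blast
  next
    case False
    then obtain a x b c where xs: "xs = a @ [x] @ b @ [x] @ c" using not_distinct_decomp by blast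
    let ?ys = "a @ x # c"
    have xs': "xs = a @ x # (b @ x # c)" using xs by simp
    have w0: "walk E (a @ x # (b @ x # c))" using less.prems(1) xs' by simp
    have w1: "walk E (a @ [x])" and w2: "walk E (x # b @ x # c)"
      using w0 walk_append[of E a x "b @ x # c"] by blast+
    have w2': "walk E ((x # b) @ x # c)" using w2 by simp
    have "walk E (x # c)" using w2' walk_append[of E "x # b" x c] by blast
    then have w: "walk E ?ys" using w1 walk_append[of E a x c] by simp
    have h: "hd ?ys = hd xs" using xs by (cases a) auto
    have l: "last ?ys = last xs" using xs by simp
    have ss: "set ?ys \<subseteq> set xs" using xs by auto
    have "length ?ys < length xs" using xs by simp
    from less.hyps[OF this w] obtain ys where "is_path E (hd ?ys) (last ?ys) ys" "set ys \<subseteq> set ?ys"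
      by blast
    then show ?thesis using h l ss by (metis order_trans)
  qed
qed

lemma path_prefix: "is_path E a b (xs @ y # ys) \<Longrightarrow> is_path E a y (xs @ [y])"
  unfolding is_path_def using walk_append[of E xs y ys] by (cases xs) auto

lemma edges_prefix: "{{xs!i, xs!Suc i} | i. Suc i < length xs}
   \<subseteq> {{(xs@ys)!i, (xs@ys)!Suc i} | i. Suc i < length (xs@ys)}"
proof
  fix e assume "e \<in> {{xs!i, xs!Suc i} | i. Suc i < length xs}"
  then obtain i where i: "Suc i < length xs" "e = {xs!i, xs!Suc i}" by blast
  have "(xs@ys)!i = xs!i" "(xs@ys)!Suc i = xs!Suc i" using i(1) by (simp_all add: nth_append)
  moreover have "Suc i < length (xs@ys)" using i(1) by simp
  ultimately show "e \<in> {{(xs@ys)!i, (xs@ys)!Suc i} | i. Suc i < length (xs@ys)}"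
    using i(2) by (intro CollectI exI[of _ i]) simp
qed

lemma edges_finite: "finite {{xs!i, xs!Suc i} | i. Suc i < length xs}"
proof -
  have "{{xs!i, xs!Suc i} | i. Suc i < length xs} = (\<lambda>i. {xs!i, xs!Suc i}) ` {i. Suc i < length xs}"
    by auto
  moreover have "finite {i. Suc i < length xs}"
    by (rule finite_subset[of _ "{..<length xs}"]) auto
  ultimately show ?thesis by simp
qed

theorem lemma1:
  fixes M :: "'m measure" and V :: "'a set" and E :: "'a set set" and Obs :: "'a set"
    and s :: 'a and tau :: "'a set \<Rightarrow> 'm \<Rightarrow> real"
  assumes "prob_space M"
    and "is_tree V E"
    and "Obs \<subseteq> V" and "Obs \<noteq> {}" and "Obs \<noteq> V"
    and "s \<in> V"
    and "\<And>e. e \<in> E \<Longrightarrow> tau e \<in> borel_measurable M"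
    and "\<And>e w. e \<in> E \<Longrightarrow> w \<in> space M \<Longrightarrow> tau e w \<ge> 0"
    and "\<And>e x. e \<in> E \<Longrightarrow> measure M {w \<in> space M. tau e w = x} = 0"
    and "prob_space.indep_vars M (\<lambda>_. borel) tau E"
  shows "AE w in M. \<forall>r\<in>obs_classes V E Obs. \<not> feasible V E Obs s tau r w \<longrightarrow> s \<notin> r"
proof (rule AE_I2)
  have T1: "\<forall>e\<in>E. \<exists>x y. e = {x, y} \<and> x \<noteq> y \<and> x \<in> V \<and> y \<in> V"
    and T2: "\<forall>u\<in>V. \<forall>v\<in>V. \<exists>!xs. is_path E u v xs"
    using assms(2) unfolding is_tree_def by simp_all
  have EV: "\<forall>e\<in>E. e \<subseteq> V"
  proof
    fix e assume "e \<in> E"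
    then obtain x y where "e = {x, y}" "x \<in> V" "y \<in> V" using T1 by blast
    then show "e \<subseteq> V" by simp
  qed
  have ex1: "\<And>a b. a \<in> V \<Longrightarrow> b \<in> V \<Longrightarrow> \<exists>!xs. is_path E a b xs"
    using T2 by simp
  have uniq: "\<And>a b P. a \<in> V \<Longrightarrow> b \<in> V \<Longrightarrow> is_path E a b P \<Longrightarrow> the_path E a b = P"
    unfolding the_path_def by (rule the1_equality[OF ex1])
  have tp: "\<And>a b. a \<in> V \<Longrightarrow> b \<in> V \<Longrightarrow> is_path E a b (the_path E a b)"
    unfolding the_path_def by (rule theI'[OF ex1])
  have pV: "\<And>a b P. a \<in> V \<Longrightarrow> is_path E a b P \<Longrightarrow> set P \<subseteq> V"
  proof -
    fix a b P assume "a \<in> V" "is_path E a b P"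
    then show "set P \<subseteq> V" using walk_V[OF EV, of P] unfolding is_path_def by simp
  qed
  fix w assume wM: "w \<in> space M"
  show "\<forall>r\<in>obs_classes V E Obs. \<not> feasible V E Obs s tau r w \<longrightarrow> s \<notin> r"
  proof (intro ballI impI)
    fix r assume rc: "r \<in> obs_classes V E Obs" and nf: "\<not> feasible V E Obs s tau r w"
    show "s \<notin> r"
    proof
      assume sr: "s \<in> r"
      obtain u where uV: "u \<in> V - Obs" and r: "r = obs_equiv V E Obs `` {u}"
        using rc unfolding obs_classes_def by (auto elim: quotientE)
      have inr: "\<And>x. x \<in> r \<longleftrightarrow> x \<in> V - Obs \<and> path_verts E u x \<inter> Obs = {}"
        using uV unfolding r obs_equiv_def by auto
      have pref_r: "y \<in> r" if xr: "x \<in> r" and yx: "y \<in> set (the_path E u x)" for x y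
      proof -
        have xV: "x \<in> V" using xr inr by auto
        obtain A B where AB: "the_path E u x = A @ y # B" using yx split_list by metis
        have uV': "u \<in> V" using uV by simp
        have p: "is_path E u y (A @ [y])" using path_prefix[of E u x A y B] tp[OF uV' xV] AB by simp
        have yV: "y \<in> V" using pV[OF _ p] uV by auto
        have "the_path E u y = A @ [y]" using uniq[OF _ yV p] uV by auto
        then have "path_verts E u y \<subseteq> path_verts E u x" using AB unfolding path_verts_def by auto
        moreover have "y \<notin> Obs" using xr inr yx unfolding path_verts_def by auto
        ultimately show ?thesis using inr xr yV by auto
      qed
      have "feasible V E Obs s tau r w" unfolding feasible_def
      proof (intro ballI impI)
        fix ob ob1 ob2
        assume ob: "ob \<in> boundary E Obs r" and ob1i: "ob1 \<in> V_or V E ob r \<inter> Obs"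
          and ob2i: "ob2 \<in> V_or V E ob r \<inter> Obs" and anc: "ancestor_in V E ob r ob1 ob2"
        have ob1: "ob1 \<in> V_or V E ob r" using ob1i by simp
        have ob2: "ob2 \<in> V_or V E ob r" using ob2i by simp
        obtain v where vr: "v \<in> r" and obO: "ob \<in> Obs" and ev: "{ob, v} \<in> E"
          using ob unfolding boundary_def by auto
        have vV: "v \<in> V" using vr inr by auto
        have obV: "ob \<in> V" using obO assms(3) by auto
        have ob2V: "ob2 \<in> V" and ob1V: "ob1 \<in> V" using ob1 ob2 unfolding V_or_def by auto
        have pus: "is_path E u s (the_path E u s)" using tp uV assms(6) by auto
        have puv: "is_path E u v (the_path E u v)" using tp uV vV by auto
        have ne1: "the_path E u s \<noteq> []" "hd (the_path E u s) = u" using pus unfolding is_path_def by simp_all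
        define S where "S = tl (the_path E u s)"
        have S: "the_path E u s = u # S" unfolding S_def using ne1 by (cases "the_path E u s") simp_all
        have ne2: "the_path E u v \<noteq> []" "hd (the_path E u v) = u" using puv unfolding is_path_def by simp_all
        define T where "T = tl (the_path E u v)"
        have T: "the_path E u v = u # T" unfolding T_def using ne2 by (cases "the_path E u v") simp_all
        define W where "W = rev S @ u # T"
        have "walk E (rev S @ [u])" using pus S walk_rev[of E "u # S"] unfolding is_path_def by simp
        moreover have "walk E (u # T)" using puv T unfolding is_path_def by simp
        ultimately have wW: "walk E W" unfolding W_def using walk_append[of E "rev S" u T] by simp
        have hW: "hd W = s"
        proof -
          have "last (u # S) = s" using pus S unfolding is_path_def by simp
          then show ?thesis unfolding W_def by (cases S rule: rev_cases) auto
        qed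
        have lW: "last W = v" using puv T unfolding W_def is_path_def by simp
        have sW: "set W \<subseteq> r"
        proof
          fix y assume "y \<in> set W"
          then have "y \<in> set (the_path E u s) \<or> y \<in> set (the_path E u v)" unfolding W_def S T by auto
          then show "y \<in> r" using pref_r[OF sr, of y] pref_r[OF vr, of y] by blast
        qed
        have Wne: "W \<noteq> []" unfolding W_def by simp
        obtain Q where Q0: "is_path E (hd W) (last W) Q" and QW: "set Q \<subseteq> set W"
          using walk_to_path[OF wW Wne] by blast
        have Q: "is_path E s v Q" using Q0 hW lW by simp
        have Qr: "set Q \<subseteq> r" using QW sW by (rule order_trans)
        have pob: "is_path E ob ob2 (the_path E ob ob2)" using tp obV ob2V by auto
        obtain Z where Z: "the_path E ob ob2 = ob # Z" using pob unfolding is_path_def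
          by (cases "the_path E ob ob2") simp_all
        have disj: "set (the_path E ob ob2) \<inter> r = {}" using ob2 unfolding V_or_def path_verts_def by auto
        obtain A B where AB: "the_path E ob ob2 = A @ ob1 # B"
          using anc unfolding ancestor_in_def path_verts_def by (metis split_list)
        define P where "P = Q @ the_path E ob ob2"
        have Qne: "Q \<noteq> []" "last Q = v" using Q unfolding is_path_def by simp_all
        define Q' where "Q' = butlast Q"
        have Q': "Q = Q' @ [v]" unfolding Q'_def using Qne append_butlast_last_id by metis
        have "walk E (Q' @ [v])" using Q Q' unfolding is_path_def by simp
        moreover have "walk E (v # ob # Z)" using ev pob Z unfolding is_path_def by (simp add: insert_commute)
        ultimately have "walk E (Q' @ v # ob # Z)" using walk_append[of E Q' v "ob # Z"] by simp
        then have wP: "walk E P" unfolding P_def using Q' Z by simp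
        have pP: "is_path E s ob2 P" unfolding is_path_def P_def
          using wP Q pob disj Qr unfolding is_path_def P_def by auto
        have e2: "the_path E s ob2 = P" using uniq[OF assms(6) ob2V pP] .
        have pP1: "is_path E s ob1 ((Q @ A) @ [ob1])"
          using path_prefix[of E s ob2 "Q @ A" ob1 B] pP AB unfolding P_def by simp
        have e1: "the_path E s ob1 = (Q @ A) @ [ob1]" using uniq[OF assms(6) ob1V pP1] .
        have sub: "path_edges E s ob1 \<subseteq> path_edges E s ob2"
          unfolding path_edges_def Let_def e1 e2 P_def AB
          using edges_prefix[of "(Q @ A) @ [ob1]" B] by simp
        have fin: "finite (path_edges E s ob2)" unfolding path_edges_def Let_def by (rule edges_finite)
        have inE: "path_edges E s ob2 \<subseteq> E" unfolding path_edges_def Let_def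
          using walk_edges[of E "the_path E s ob2"] tp[OF assms(6) ob2V] unfolding is_path_def by auto
        show "infection_time E s tau ob1 w \<le> infection_time E s tau ob2 w"
          unfolding infection_time_def
          by (rule sum_mono2[OF fin sub]) (use inE assms(8) wM in auto)
      qed
      then show False using nf by simp
    qed
  qed
qed

end
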